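(* The solitary mechanism satisfies weak UIC, weak MIC, and $c$-weak-SCP for every integer $c\ge1$, for any block size $B\ge2$ (finite or infinite).
   Context: Setting (TFM). Each user $i$ has a true value $v_i\ge0$ and submits a single bid $b_i\ge0$. A TFM consists of an inclusion rule (run by the miner, choosing at most $B$ bids to include) and confirmation, payment and miner-revenue rules (run by the blockchain on the included bids). Solitary mechanism: include the two highest bids (a missing bid counts as $0$); only the highest included bid is confirmed, and it pays the second-highest included bid; the miner is paid the second-highest included bid. Strategic players: a user, the miner, or the miner with some users; they may have users bid untruthfully after seeing all bids, inject fake bids (true value $0$), and (if the miner is involved) include any at most $B$ available bids. Weak ($1$-strict) utility: miner revenue (if the miner is in the player) plus $v-p$ for each confirmed transaction of the player (true value $v$, payment $p$), minus $(b-v)$ for each unconfirmed transaction of the player with bid $b>v$. Weak UIC: with an honest miner, each user's weak utility is maximized by truthful bidding without fake bids, whatever the other bids. Weak MIC: the miner's weak utility is maximized by honestly following the inclusion rule without fake bids, whatever the bids. $c$-weak-SCP: for every coalition of the miner with between $1$ and $c$ users, joint weak utility is maximized by truthful bidding and honest miner behavior, whatever the other bids. *)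

theory Defs
  imports Complex_Main "HOL-Library.Extended_Nat"
begin

(* A transaction in the pool: (bid, owner).  owner = Some v means the
   transaction belongs to the strategic player and has true value v
   (fake bids have true value 0); owner = None means it belongs to some
   other (non-strategic) user. *)
type_synonym tx = "real \<times> real option"

definition nonneg :: "real list \<Rightarrow> bool" where
  "nonneg xs \<longleftrightarrow> (\<forall>x\<in>set xs. 0 \<le> x)"

definition others_txs :: "real list \<Rightarrow> tx list" where
  "others_txs bs = map (\<lambda>b. (b, None)) bs"

definition player_txs :: "real list \<Rightarrow> real list \<Rightarrow> real list \<Rightarrow> tx list" where
  "player_txs vs bs' fs = map (\<lambda>(v, b). (b, Some v)) (zip vs bs') @ map (\<lambda>f. (f, Some 0)) fs"

definition honest_inclusion :: "tx list \<Rightarrow> nat set \<Rightarrow> bool" where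
  "honest_inclusion txs I \<longleftrightarrow>
     I \<subseteq> {..<length txs} \<and> card I = min 2 (length txs) \<and>
     (\<forall>i\<in>I. \<forall>k\<in>{..<length txs} - I. fst (txs ! k) \<le> fst (txs ! i))"

(* arbitrary (possibly dishonest) inclusion of at most B available bids *)
definition valid_inclusion :: "enat \<Rightarrow> tx list \<Rightarrow> nat set \<Rightarrow> bool" where
  "valid_inclusion B txs I \<longleftrightarrow> I \<subseteq> {..<length txs} \<and> enat (card I) \<le> B"

definition valid_confirm :: "tx list \<Rightarrow> nat set \<Rightarrow> nat option \<Rightarrow> bool" where
  "valid_confirm txs I c \<longleftrightarrow>
     (case c of None \<Rightarrow> I = {}
      | Some j \<Rightarrow> j \<in> I \<and> (\<forall>k\<in>I. fst (txs ! k) \<le> fst (txs ! j)))"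

(* payment of the confirmed bid = second-highest included bid (missing = 0);
   the miner's revenue equals this amount *)
definition payment :: "tx list \<Rightarrow> nat set \<Rightarrow> nat option \<Rightarrow> real" where
  "payment txs I c =
     (case c of None \<Rightarrow> 0
      | Some j \<Rightarrow> Max (insert 0 ((\<lambda>k. fst (txs ! k)) ` (I - {j}))))"

definition weak_utility :: "bool \<Rightarrow> tx list \<Rightarrow> nat set \<Rightarrow> nat option \<Rightarrow> real" where
  "weak_utility miner txs I c =
     (if miner then payment txs I c else 0) +
     (\<Sum>i<length txs. (case snd (txs ! i) of None \<Rightarrow> 0
        | Some v \<Rightarrow> (if c = Some i then v - payment txs I c
                     else if fst (txs ! i) > v then - (fst (txs ! i) - v) else 0)))"

definition weak_UIC :: bool where
  "weak_UIC \<longleftrightarrow>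
    (\<forall>v bs b fs I c I' c'.
       0 \<le> v \<longrightarrow> nonneg bs \<longrightarrow> 0 \<le> b \<longrightarrow> nonneg fs \<longrightarrow>
       honest_inclusion (player_txs [v] [v] [] @ others_txs bs) I \<longrightarrow>
       valid_confirm (player_txs [v] [v] [] @ others_txs bs) I c \<longrightarrow>
       honest_inclusion (player_txs [v] [b] fs @ others_txs bs) I' \<longrightarrow>
       valid_confirm (player_txs [v] [b] fs @ others_txs bs) I' c' \<longrightarrow>
       weak_utility False (player_txs [v] [b] fs @ others_txs bs) I' c'
         \<le> weak_utility False (player_txs [v] [v] [] @ others_txs bs) I c)"

definition weak_MIC :: "enat \<Rightarrow> bool" where
  "weak_MIC B \<longleftrightarrow>
    (\<forall>bs fs I c I' c'.
       nonneg bs \<longrightarrow> nonneg fs \<longrightarrow>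
       honest_inclusion (others_txs bs) I \<longrightarrow>
       valid_confirm (others_txs bs) I c \<longrightarrow>
       valid_inclusion B (player_txs [] [] fs @ others_txs bs) I' \<longrightarrow>
       valid_confirm (player_txs [] [] fs @ others_txs bs) I' c' \<longrightarrow>
       weak_utility True (player_txs [] [] fs @ others_txs bs) I' c'
         \<le> weak_utility True (others_txs bs) I c)"

definition weak_SCP :: "nat \<Rightarrow> enat \<Rightarrow> bool" where
  "weak_SCP c B \<longleftrightarrow>
    (\<forall>vs bs' bs fs I cf I' cf'.
       1 \<le> length vs \<longrightarrow> length vs \<le> c \<longrightarrow> length bs' = length vs \<longrightarrow>
       nonneg vs \<longrightarrow> nonneg bs' \<longrightarrow> nonneg bs \<longrightarrow> nonneg fs \<longrightarrow>
       honest_inclusion (player_txs vs vs [] @ others_txs bs) I \<longrightarrow>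
       valid_confirm (player_txs vs vs [] @ others_txs bs) I cf \<longrightarrow>
       valid_inclusion B (player_txs vs bs' fs @ others_txs bs) I' \<longrightarrow>
       valid_confirm (player_txs vs bs' fs @ others_txs bs) I' cf' \<longrightarrow>
       weak_utility True (player_txs vs bs' fs @ others_txs bs) I' cf'
         \<le> weak_utility True (player_txs vs vs [] @ others_txs bs) I cf)"

end

theory Submission
  imports Defs
begin

definition tm :: "tx list \<Rightarrow> nat set \<Rightarrow> nat option \<Rightarrow> nat \<Rightarrow> real" where
  "tm txs I c i = (case snd (txs ! i) of None \<Rightarrow> 0
        | Some v \<Rightarrow> (if c = Some i then v - payment txs I c
                     else if fst (txs ! i) > v then - (fst (txs ! i) - v) else 0))"

lemma wu_eq: "weak_utility m txs I c = (if m then payment txs I c else 0) + (\<Sum>i<length txs. tm txs I c i)"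
  unfolding weak_utility_def tm_def by simp

lemma sum_le_S:
  fixes f :: "nat \<Rightarrow> real"
  assumes "S \<subseteq> {..<n}" "\<And>i. i < n \<Longrightarrow> i \<notin> S \<Longrightarrow> f i \<le> 0"
  shows "sum f {..<n} \<le> sum f S"
proof -
  have "sum f {..<n} = sum f ({..<n} - S) + sum f S"
    using assms(1) by (simp add: sum.subset_diff)
  moreover have "sum f ({..<n} - S) \<le> 0" using assms(2) by (intro sum_nonpos) auto
  ultimately show ?thesis by simp
qed

lemma tm_le0: "c \<noteq> Some i \<Longrightarrow> tm txs I c i \<le> 0"
  unfolding tm_def by (auto split: option.splits)

lemma tm_pen: "c \<noteq> Some i \<Longrightarrow> snd (txs ! i) = Some v \<Longrightarrow> tm txs I c i \<le> v - fst (txs ! i)"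
  unfolding tm_def by auto

lemma tm_conf: "snd (txs ! j) = Some v \<Longrightarrow> tm txs I (Some j) j = v - payment txs I (Some j)"
  unfolding tm_def by auto

lemma tm_confN: "snd (txs ! j) = None \<Longrightarrow> tm txs I c j = 0"
  unfolding tm_def by auto

lemma tm_truth: "c \<noteq> Some i \<Longrightarrow> (\<And>v. snd (txs ! i) = Some v \<Longrightarrow> fst (txs ! i) = v) \<Longrightarrow> tm txs I c i = 0"
  unfolding tm_def by (auto split: option.splits)

lemma pay_nonneg: "finite I \<Longrightarrow> 0 \<le> payment txs I c"
  unfolding payment_def by (auto split: option.splits)

lemma pay_ge: "finite I \<Longrightarrow> k \<in> I \<Longrightarrow> k \<noteq> j \<Longrightarrow> fst (txs ! k) \<le> payment txs I (Some j)"
  unfolding payment_def by (auto intro: Max_ge)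

lemma pay_cases: "finite I \<Longrightarrow> payment txs I (Some j) = 0 \<or> (\<exists>k\<in>I. k \<noteq> j \<and> payment txs I (Some j) = fst (txs ! k))"
proof -
  assume f: "finite I"
  have "Max (insert 0 ((\<lambda>k. fst (txs ! k)) ` (I - {j}))) \<in> insert 0 ((\<lambda>k. fst (txs ! k)) ` (I - {j}))"
    using f by (intro Max_in) auto
  thus ?thesis unfolding payment_def by auto
qed

lemma pay_le: "finite I \<Longrightarrow> (\<forall>k\<in>I. fst (txs ! k) \<le> x) \<Longrightarrow> 0 \<le> x \<Longrightarrow> payment txs I (Some j) \<le> x"
  unfolding payment_def by (simp add: Max_le_iff)

lemma dev_miner:
  assumes I: "I \<subseteq> {..<length txs}" and vc: "valid_confirm txs I c"
  shows "weak_utility True txs I c \<le> 0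
    \<or> (\<exists>i<length txs. \<exists>v. snd (txs ! i) = Some v \<and> weak_utility True txs I c \<le> v)
    \<or> (\<exists>j<length txs. \<exists>k<length txs. j \<noteq> k \<and> snd (txs ! j) = None \<and> snd (txs ! k) = None
         \<and> weak_utility True txs I c \<le> fst (txs ! k) \<and> fst (txs ! k) \<le> fst (txs ! j))"
proof -
  let ?n = "length txs"
  let ?U = "weak_utility True txs I c"
  have fI: "finite I" using I finite_subset by blast
  show ?thesis
  proof (cases c)
    case None
    then have "I = {}" using vc unfolding valid_confirm_def by simp
    have "(\<Sum>i<?n. tm txs I c i) \<le> 0" using None tm_le0 by (intro sum_nonpos) auto
    moreover have "payment txs I c = 0" using None unfolding payment_def by simp
    ultimately show ?thesis by (simp add: wu_eq)
  next
    case (Some j)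
    have jI: "j \<in> I" and jmax: "\<forall>k\<in>I. fst (txs ! k) \<le> fst (txs ! j)"
      using vc Some unfolding valid_confirm_def by auto
    have jn: "j < ?n" using I jI by auto
    let ?p = "payment txs I c"
    from pay_cases[OF fI, of txs j] Some
    consider (z) "?p = 0" | (k) k where "k \<in> I" "k \<noteq> j" "?p = fst (txs ! k)" by auto
    then show ?thesis
    proof cases
      case z
      have "(\<Sum>i<?n. tm txs I c i) \<le> (\<Sum>i\<in>{j}. tm txs I c i)"
        using jn Some by (intro sum_le_S) (auto intro: tm_le0)
      hence U: "?U \<le> tm txs I c j" using z by (simp add: wu_eq)
      show ?thesis
      proof (cases "snd (txs ! j)")
        case None
        then show ?thesis using U tm_confN[OF None] by simp
      next
        case (Some v)
        then have "tm txs I c j = v" using tm_conf[OF Some] z \<open>c = Some j\<close> by simp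
        then show ?thesis using U Some jn by blast
      qed
    next
      case k
      have kn: "k < ?n" using I k by auto
      have "(\<Sum>i<?n. tm txs I c i) \<le> (\<Sum>i\<in>{j,k}. tm txs I c i)"
        using jn kn Some by (intro sum_le_S) (auto intro: tm_le0)
      hence U: "?U \<le> ?p + tm txs I c j + tm txs I c k" using k by (simp add: wu_eq)
      have tk0: "tm txs I c k \<le> 0" using Some k by (intro tm_le0) auto
      show ?thesis
      proof (cases "snd (txs ! j)")
        case (Some v)
        then have "tm txs I c j = v - ?p" using tm_conf[OF Some] \<open>c = Some j\<close> by simp
        then show ?thesis using U Some jn tk0 by (intro disjI2 disjI1) (rule exI[of _ j], auto)
      next
        case None
        have tj: "tm txs I c j = 0" using tm_confN[OF None] .
        show ?thesis
        proof (cases "snd (txs ! k)")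
          case None2: None
          have "?U \<le> fst (txs ! k)" using U tj tk0 k by simp
          moreover have "fst (txs ! k) \<le> fst (txs ! j)" using jmax k by auto
          ultimately show ?thesis using jn kn k None None2 by blast
        next
          case (Some w)
          have "tm txs I c k \<le> w - fst (txs ! k)" using tm_pen[OF _ Some] \<open>c = Some j\<close> k by auto
          then have "?U \<le> w" using U tj k by simp
          then show ?thesis using Some kn by blast
        qed
      qed
    qed
  qed
qed

lemma honest_facts:
  assumes h: "honest_inclusion txs I" and vc: "valid_confirm txs I (Some m)"
  shows "\<And>a. a < length txs \<Longrightarrow> fst (txs ! a) \<le> fst (txs ! m)"
    and "\<And>a. a < length txs \<Longrightarrow> a \<noteq> m \<Longrightarrow> fst (txs ! a) \<le> payment txs I (Some m)"
    and "m < length txs"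
proof -
  have I: "I \<subseteq> {..<length txs}" and cI: "card I = min 2 (length txs)"
    and top: "\<forall>i\<in>I. \<forall>k\<in>{..<length txs} - I. fst (txs ! k) \<le> fst (txs ! i)"
    using h unfolding honest_inclusion_def by auto
  have fI: "finite I" using I finite_subset by blast
  have mI: "m \<in> I" and mmax: "\<forall>k\<in>I. fst (txs ! k) \<le> fst (txs ! m)"
    using vc unfolding valid_confirm_def by auto
  show "m < length txs" using mI I by auto
  show "\<And>a. a < length txs \<Longrightarrow> fst (txs ! a) \<le> fst (txs ! m)"
    using mmax top mI by (metis DiffI lessThan_iff)
  fix a assume an: "a < length txs" "a \<noteq> m"
  show "fst (txs ! a) \<le> payment txs I (Some m)"
  proof (cases "a \<in> I")
    case True then show ?thesis using pay_ge[OF fI] an by auto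
  next
    case False
    have "length txs \<ge> 2" using an \<open>m < length txs\<close> by linarith
    hence "card I = 2" using cI by simp
    then obtain x y where xy: "I = {x, y}" "x \<noteq> y" by (meson card_2_iff)
    then obtain i where i: "i \<in> I" "i \<noteq> m" by auto
    have "fst (txs ! a) \<le> fst (txs ! i)" using top i False an by auto
    also have "\<dots> \<le> payment txs I (Some m)" using pay_ge[OF fI i(1) i(2)] .
    finally show ?thesis .
  qed
qed

lemma honest_miner:
  assumes h: "honest_inclusion txs I" and vc: "valid_confirm txs I c"
    and trA: "\<forall>i<length txs. \<forall>v. snd (txs ! i) = Some v \<longrightarrow> fst (txs ! i) = v"
    and nnA: "\<forall>i<length txs. 0 \<le> fst (txs ! i)"
  shows "0 \<le> weak_utility True txs I c"
    and "\<And>i v. i < length txs \<Longrightarrow> snd (txs ! i) = Some v \<Longrightarrow> v \<le> weak_utility True txs I c"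
    and "\<And>j k. j < length txs \<Longrightarrow> k < length txs \<Longrightarrow> j \<noteq> k \<Longrightarrow> snd (txs ! j) = None \<Longrightarrow> snd (txs ! k) = None
          \<Longrightarrow> fst (txs ! k) \<le> fst (txs ! j) \<Longrightarrow> fst (txs ! k) \<le> weak_utility True txs I c"
proof -
  have tr: "\<And>i v. i < length txs \<Longrightarrow> snd (txs ! i) = Some v \<Longrightarrow> fst (txs ! i) = v" using trA by blast
  have nn: "\<And>i. i < length txs \<Longrightarrow> 0 \<le> fst (txs ! i)" using nnA by blast
  have I: "I \<subseteq> {..<length txs}" and cI: "card I = min 2 (length txs)"
    using h unfolding honest_inclusion_def by auto
  have fI: "finite I" using I finite_subset by blast
  let ?U = "weak_utility True txs I c"
  have p0: "0 \<le> payment txs I c" using pay_nonneg[OF fI] .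
  show g0: "0 \<le> ?U"
  proof (cases c)
    case None
    then have "I = {}" using vc unfolding valid_confirm_def by simp
    then have "length txs = 0" using cI by (simp add: min_def split: if_splits)
    then show ?thesis unfolding weak_utility_def payment_def using None by simp
  next
    case (Some m)
    note hf = honest_facts[OF h vc[unfolded Some]]
    have sum: "(\<Sum>i<length txs. tm txs I c i) = (\<Sum>i\<in>{m}. tm txs I c i)"
      using hf(3) Some by (intro sum.mono_neutral_right) (auto intro: tm_truth tr)
    show ?thesis
    proof (cases "snd (txs ! m)")
      case None then show ?thesis using sum p0 tm_confN[OF None] by (simp add: wu_eq)
    next
      case (Some v)
      then show ?thesis using sum tm_conf[OF Some] \<open>c = Some m\<close> nn[OF hf(3)] tr[OF hf(3) Some]
        by (simp add: wu_eq)
    qed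
  qed
  have key: "\<exists>m. c = Some m \<and> m < length txs \<and> (\<forall>a<length txs. fst (txs ! a) \<le> fst (txs ! m))
     \<and> (\<forall>a<length txs. a \<noteq> m \<longrightarrow> fst (txs ! a) \<le> payment txs I c)
     \<and> ?U = (if snd (txs ! m) = None then payment txs I c else fst (txs ! m))" if "length txs > 0"
  proof (cases c)
    case None
    then have "I = {}" using vc unfolding valid_confirm_def by simp
    then have "length txs = 0" using cI by (simp add: min_def split: if_splits)
    then show ?thesis using that by simp
  next
    case (Some m)
    note hf = honest_facts[OF h vc[unfolded Some]]
    have sum: "(\<Sum>i<length txs. tm txs I c i) = (\<Sum>i\<in>{m}. tm txs I c i)"
      using hf(3) Some by (intro sum.mono_neutral_right) (auto intro: tm_truth tr)
    have "?U = (if snd (txs ! m) = None then payment txs I c else fst (txs ! m))"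
    proof (cases "snd (txs ! m)")
      case None then show ?thesis using sum tm_confN[OF None] by (simp add: wu_eq)
    next
      case (Some v)
      then show ?thesis using sum tm_conf[OF Some] \<open>c = Some m\<close> tr[OF hf(3) Some]
        by (simp add: wu_eq)
    qed
    then show ?thesis using hf Some by auto
  qed
  show "\<And>i v. i < length txs \<Longrightarrow> snd (txs ! i) = Some v \<Longrightarrow> v \<le> ?U"
  proof -
    fix i v assume a: "i < length txs" "snd (txs ! i) = Some v"
    then obtain m where m: "c = Some m" "m < length txs" "\<forall>a<length txs. fst (txs ! a) \<le> fst (txs ! m)"
      "\<forall>a<length txs. a \<noteq> m \<longrightarrow> fst (txs ! a) \<le> payment txs I c"
      "?U = (if snd (txs ! m) = None then payment txs I c else fst (txs ! m))"
      using key by fastforce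
    have "fst (txs ! i) = v" using tr a by auto
    then show "v \<le> ?U" using m a by (cases "snd (txs ! m)") auto
  qed
  show "\<And>j k. j < length txs \<Longrightarrow> k < length txs \<Longrightarrow> j \<noteq> k \<Longrightarrow> snd (txs ! j) = None \<Longrightarrow> snd (txs ! k) = None
          \<Longrightarrow> fst (txs ! k) \<le> fst (txs ! j) \<Longrightarrow> fst (txs ! k) \<le> ?U"
  proof -
    fix j k assume a: "j < length txs" "k < length txs" "j \<noteq> k" "snd (txs ! j) = None" "snd (txs ! k) = None"
          "fst (txs ! k) \<le> fst (txs ! j)"
    then obtain m where m: "c = Some m" "m < length txs" "\<forall>a<length txs. fst (txs ! a) \<le> fst (txs ! m)"
      "\<forall>a<length txs. a \<noteq> m \<longrightarrow> fst (txs ! a) \<le> payment txs I c"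
      "?U = (if snd (txs ! m) = None then payment txs I c else fst (txs ! m))"
      using key by fastforce
    show "fst (txs ! k) \<le> ?U"
    proof (cases "snd (txs ! m) = None")
      case True
      then show ?thesis using m a by (cases "k = m") force+
    next
      case False then show ?thesis using m a by auto
    qed
  qed
qed


lemma pay_le2: "finite I \<Longrightarrow> (\<forall>k\<in>I - {j}. fst (txs ! k) \<le> x) \<Longrightarrow> 0 \<le> x \<Longrightarrow> payment txs I (Some j) \<le> x"
  unfolding payment_def by (simp add: Max_le_iff)

lemma honest_user:
  assumes h: "honest_inclusion txs I" and vc: "valid_confirm txs I c"
    and trA: "\<forall>i<length txs. \<forall>v. snd (txs ! i) = Some v \<longrightarrow> fst (txs ! i) = v"
    and nnA: "\<forall>i<length txs. 0 \<le> fst (txs ! i)"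
    and i: "i < length txs" "snd (txs ! i) = Some v" and x: "0 \<le> x"
    and xb: "\<And>k. k < length txs \<Longrightarrow> k \<noteq> i \<Longrightarrow> fst (txs ! k) \<le> x"
  shows "v - x \<le> weak_utility False txs I c"
proof -
  have tr: "\<And>i v. i < length txs \<Longrightarrow> snd (txs ! i) = Some v \<Longrightarrow> fst (txs ! i) = v" using trA by blast
  have nn: "\<And>i. i < length txs \<Longrightarrow> 0 \<le> fst (txs ! i)" using nnA by blast
  have I: "I \<subseteq> {..<length txs}" and cI: "card I = min 2 (length txs)"
    using h unfolding honest_inclusion_def by auto
  have fI: "finite I" using I finite_subset by blast
  obtain m where m: "c = Some m"
  proof (cases c)
    case None
    then have "I = {}" using vc unfolding valid_confirm_def by simp
    then have "length txs = 0" using cI by (simp add: min_def split: if_splits)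
    then show ?thesis using i by simp
  qed auto
  note hf = honest_facts[OF h vc[unfolded m]]
  have sum: "(\<Sum>i<length txs. tm txs I c i) = (\<Sum>i\<in>{m}. tm txs I c i)"
    using hf(3) m by (intro sum.mono_neutral_right) (auto intro: tm_truth tr)
  have U: "weak_utility False txs I c = tm txs I c m" using sum by (simp add: wu_eq)
  have vi: "fst (txs ! i) = v" using tr i by auto
  show ?thesis
  proof (cases "v \<le> x")
    case True
    have "0 \<le> tm txs I c m"
    proof (cases "snd (txs ! m)")
      case None then show ?thesis using tm_confN[OF None] by simp
    next
      case (Some w)
      have "payment txs I c \<le> fst (txs ! m)"
        using m pay_le2[OF fI, of m txs "fst (txs ! m)"] hf(1) hf(3) nn I by auto
      then show ?thesis using tm_conf[OF Some] m tr[OF hf(3) Some] by simp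
    qed
    then show ?thesis using True U by simp
  next
    case False
    have "m = i"
    proof (rule ccontr)
      assume "m \<noteq> i"
      then have "fst (txs ! m) \<le> x" using xb hf(3) by auto
      moreover have "fst (txs ! i) \<le> fst (txs ! m)" using hf(1) i by auto
      ultimately show False using vi False by simp
    qed
    have "payment txs I c \<le> x" using m \<open>m = i\<close> pay_le2[OF fI, of i txs x] xb x I by auto
    then show ?thesis using U tm_conf[OF i(2)] m \<open>m = i\<close> by simp
  qed
qed

lemma honest_user0:
  assumes h: "honest_inclusion txs I" and vc: "valid_confirm txs I c"
    and trA: "\<forall>i<length txs. \<forall>v. snd (txs ! i) = Some v \<longrightarrow> fst (txs ! i) = v"
    and nnA: "\<forall>i<length txs. 0 \<le> fst (txs ! i)"
  shows "0 \<le> weak_utility False txs I c"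
proof -
  have tr: "\<And>i v. i < length txs \<Longrightarrow> snd (txs ! i) = Some v \<Longrightarrow> fst (txs ! i) = v" using trA by blast
  have nn: "\<And>i. i < length txs \<Longrightarrow> 0 \<le> fst (txs ! i)" using nnA by blast
  show ?thesis
  proof (cases c)
  case None
  have "I = {}" using vc None unfolding valid_confirm_def by simp
  then have "length txs = 0" using h unfolding honest_inclusion_def by (simp add: min_def split: if_splits)
  then show ?thesis by (simp add: wu_eq)
next
  case m: (Some m)
  have I: "I \<subseteq> {..<length txs}" using h unfolding honest_inclusion_def by auto
  have fI: "finite I" using I finite_subset by blast
  note hf = honest_facts[OF h vc[unfolded m]]
  have sum: "(\<Sum>i<length txs. tm txs I c i) = (\<Sum>i\<in>{m}. tm txs I c i)"
    using hf(3) m by (intro sum.mono_neutral_right) (auto intro: tm_truth tr)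
  have U: "weak_utility False txs I c = tm txs I c m" using sum by (simp add: wu_eq)
  have "0 \<le> tm txs I c m"
  proof (cases "snd (txs ! m)")
    case None then show ?thesis using tm_confN[OF None] by simp
  next
    case (Some w)
    have "payment txs I c \<le> fst (txs ! m)"
      using m pay_le2[OF fI, of m txs "fst (txs ! m)"] hf(1) hf(3) nn I by auto
    then show ?thesis using tm_conf[OF Some] m tr[OF hf(3) Some] by simp
  qed
  then show ?thesis using U by simp
qed
qed

lemma dev_user:
  assumes h: "honest_inclusion txs I" and vc: "valid_confirm txs I c"
  shows "weak_utility False txs I c \<le> 0 \<or> (\<exists>j v. c = Some j \<and> j < length txs \<and> snd (txs ! j) = Some v
      \<and> weak_utility False txs I c \<le> v - payment txs I c
      \<and> (\<forall>a<length txs. a \<noteq> j \<longrightarrow> fst (txs ! a) \<le> payment txs I c))"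
proof (cases c)
  case None
  have "(\<Sum>i<length txs. tm txs I c i) \<le> 0" using None tm_le0 by (intro sum_nonpos) auto
  then show ?thesis by (simp add: wu_eq)
next
  case (Some j)
  note hf = honest_facts[OF h vc[unfolded Some]]
  have "(\<Sum>i<length txs. tm txs I c i) \<le> (\<Sum>i\<in>{j}. tm txs I c i)"
    using hf(3) Some by (intro sum_le_S) (auto intro: tm_le0)
  hence U: "weak_utility False txs I c \<le> tm txs I c j" by (simp add: wu_eq)
  show ?thesis
  proof (cases "snd (txs ! j)")
    case None then show ?thesis using U tm_confN[OF None] by simp
  next
    case (Some v)
    then show ?thesis using U tm_conf[OF Some] \<open>c = Some j\<close> hf by auto
  qed
qed

lemma L_len: "length bs' = length vs \<Longrightarrow>
  length (player_txs vs bs' fs @ others_txs bs) = length vs + length fs + length bs"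
  unfolding player_txs_def others_txs_def by simp

lemma L_nth:
  assumes "length bs' = length vs" "i < length (player_txs vs bs' fs @ others_txs bs)"
  shows "(i < length vs \<and> (player_txs vs bs' fs @ others_txs bs) ! i = (bs' ! i, Some (vs ! i)))
    \<or> (length vs \<le> i \<and> i < length vs + length fs \<and> (player_txs vs bs' fs @ others_txs bs) ! i = (fs ! (i - length vs), Some 0))
    \<or> (length vs + length fs \<le> i \<and> i - length vs - length fs < length bs \<and>
        (player_txs vs bs' fs @ others_txs bs) ! i = (bs ! (i - length vs - length fs), None))"
  using assms unfolding player_txs_def others_txs_def
  by (auto simp: nth_append)

lemma L_nth_others:
  assumes "length bs' = length vs" "t < length bs"
  shows "(player_txs vs bs' fs @ others_txs bs) ! (length vs + length fs + t) = (bs ! t, None)"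
  using assms unfolding player_txs_def others_txs_def
  by (auto simp: nth_append)


lemma nonneg_nth: "nonneg xs \<Longrightarrow> i < length xs \<Longrightarrow> 0 \<le> xs ! i"
  unfolding nonneg_def by auto

lemma scp_gen:
  assumes len: "length bs' = length vs"
    and nv: "nonneg vs" and nb': "nonneg bs'" and nb: "nonneg bs" and nf: "nonneg fs"
    and h: "honest_inclusion (player_txs vs vs [] @ others_txs bs) I"
    and vc: "valid_confirm (player_txs vs vs [] @ others_txs bs) I cf"
    and I': "I' \<subseteq> {..<length (player_txs vs bs' fs @ others_txs bs)}"
    and vc': "valid_confirm (player_txs vs bs' fs @ others_txs bs) I' cf'"
  shows "weak_utility True (player_txs vs bs' fs @ others_txs bs) I' cf'
         \<le> weak_utility True (player_txs vs vs [] @ others_txs bs) I cf"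
proof -
  define H where "H = player_txs vs vs [] @ others_txs bs"
  define D where "D = player_txs vs bs' fs @ others_txs bs"
  have lenH: "length H = length vs + length bs" using L_len[of vs vs "[]" bs] unfolding H_def by simp
  have lenD: "length D = length vs + length fs + length bs" using L_len[OF len] unfolding D_def by simp
  have nthH: "\<And>i. i < length H \<Longrightarrow> (i < length vs \<and> H ! i = (vs ! i, Some (vs ! i)))
      \<or> (length vs \<le> i \<and> i - length vs < length bs \<and> H ! i = (bs ! (i - length vs), None))"
  proof -
    fix i assume "i < length H"
    from L_nth[of vs vs i "[]" bs, OF refl this[unfolded H_def]]
    show "?thesis i" unfolding H_def by auto
  qed
  have nthD: "\<And>i. i < length D \<Longrightarrow> (i < length vs \<and> D ! i = (bs' ! i, Some (vs ! i)))
    \<or> (length vs \<le> i \<and> i < length vs + length fs \<and> D ! i = (fs ! (i - length vs), Some 0))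
    \<or> (length vs + length fs \<le> i \<and> i - length vs - length fs < length bs \<and>
        D ! i = (bs ! (i - length vs - length fs), None))"
  proof -
    fix i assume "i < length D"
    from L_nth[OF len this[unfolded D_def]]
    show "?thesis i" unfolding D_def .
  qed
  have trH: "\<forall>i<length H. \<forall>v. snd (H ! i) = Some v \<longrightarrow> fst (H ! i) = v"
  proof (intro allI impI)
    fix i v assume that: "i < length H" "snd (H ! i) = Some v"
    show "fst (H ! i) = v" using nthH[OF that(1)] that(2) by auto
  qed
  have nnH: "\<forall>i<length H. 0 \<le> fst (H ! i)"
  proof (intro allI impI)
    fix i assume that: "i < length H"
    show "0 \<le> fst (H ! i)"
      using nthH[OF that(1)] nonneg_nth[OF nv, of i] nonneg_nth[OF nb, of "i - length vs"] by auto
  qed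
  have nnD: "\<And>i v. i < length D \<Longrightarrow> snd (D ! i) = Some v \<Longrightarrow> 0 \<le> v"
  proof -
    fix i v assume that: "i < length D" "snd (D ! i) = Some v"
    show "0 \<le> v" using nthD[OF that(1)] that(2) nonneg_nth[OF nv, of i] by auto
  qed
  note hm = honest_miner[OF h[folded H_def] vc[folded H_def] trH nnH]
  have I'': "I' \<subseteq> {..<length D}" using I' unfolding D_def .
  from dev_miner[OF I'' vc'[folded D_def]]
  consider (a) "weak_utility True D I' cf' \<le> 0"
    | (b) i v where "i < length D" "snd (D ! i) = Some v" "weak_utility True D I' cf' \<le> v"
    | (c) j k where "j < length D" "k < length D" "j \<noteq> k" "snd (D ! j) = None" "snd (D ! k) = None"
         "weak_utility True D I' cf' \<le> fst (D ! k)" "fst (D ! k) \<le> fst (D ! j)"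
    by (elim disjE exE conjE) blast+
  then have "weak_utility True D I' cf' \<le> weak_utility True H I cf"
  proof cases
    case a then show ?thesis using hm(1) by linarith
  next
    case b
    from nthD[OF b(1)] b(2) consider "i < length vs" "v = vs ! i" | "v = 0" by auto
    then show ?thesis
    proof cases
      case 1
      have iH: "i < length H" using 1 lenH by simp
      have "snd (H ! i) = Some v" using 1 nthH[OF iH] by auto
      then have "v \<le> weak_utility True H I cf" using hm(2)[OF iH] by blast
      then show ?thesis using b(3) by linarith
    next
      case 2 then show ?thesis using hm(1) b(3) by linarith
    qed
  next
    case c
    let ?o = "length vs + length fs"
    have j: "?o \<le> j" "j - ?o < length bs" "D ! j = (bs ! (j - ?o), None)"
      using nthD[OF c(1)] c(4) by auto
    have k: "?o \<le> k" "k - ?o < length bs" "D ! k = (bs ! (k - ?o), None)"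
      using nthD[OF c(2)] c(5) by auto
    define tj where "tj = j - ?o"
    define tk where "tk = k - ?o"
    have Hj: "H ! (length vs + tj) = (bs ! tj, None)" using L_nth_others[of vs vs tj bs "[]"] j(2)
      unfolding H_def tj_def by simp
    have Hk: "H ! (length vs + tk) = (bs ! tk, None)" using L_nth_others[of vs vs tk bs "[]"] k(2)
      unfolding H_def tk_def by simp
    have "tj \<noteq> tk" using j k c(3) unfolding tj_def tk_def by linarith
    then have "fst (H ! (length vs + tk)) \<le> weak_utility True H I cf"
      using hm(3)[of "length vs + tj" "length vs + tk"] Hj Hk j(2) k(2) lenH c(7) j(3) k(3)
      unfolding tj_def tk_def by simp
    then show ?thesis using c(6) Hk k(3) unfolding tk_def by simp
  qed
  then show ?thesis unfolding H_def D_def .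
qed

lemma scp_all: "weak_SCP c B"
    unfolding weak_SCP_def valid_inclusion_def
  proof (intro allI impI)
    fix vs bs' bs fs I cf I' cf'
    assume a: "1 \<le> length vs" "length vs \<le> c" "length bs' = length vs"
      "nonneg vs" "nonneg bs'" "nonneg bs" "nonneg fs"
      "honest_inclusion (player_txs vs vs [] @ others_txs bs) I"
      "valid_confirm (player_txs vs vs [] @ others_txs bs) I cf"
      "I' \<subseteq> {..<length (player_txs vs bs' fs @ others_txs bs)} \<and> enat (card I') \<le> B"
      "valid_confirm (player_txs vs bs' fs @ others_txs bs) I' cf'"
    show "weak_utility True (player_txs vs bs' fs @ others_txs bs) I' cf'
         \<le> weak_utility True (player_txs vs vs [] @ others_txs bs) I cf"
      using scp_gen[OF a(3-9) conjunct1[OF a(10)] a(11)] .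
  qed
lemma mic_all: "weak_MIC B"
    unfolding weak_MIC_def valid_inclusion_def
  proof (intro allI impI)
    fix bs fs I c I' c'
    assume a: "nonneg bs" "nonneg fs" "honest_inclusion (others_txs bs) I"
      "valid_confirm (others_txs bs) I c"
      "I' \<subseteq> {..<length (player_txs [] [] fs @ others_txs bs)} \<and> enat (card I') \<le> B"
      "valid_confirm (player_txs [] [] fs @ others_txs bs) I' c'"
    have e: "player_txs [] [] [] = []" unfolding player_txs_def by simp
    show "weak_utility True (player_txs [] [] fs @ others_txs bs) I' c' \<le> weak_utility True (others_txs bs) I c"
      using scp_gen[of "[]" "[]" bs fs I c I' c'] a(1,2,3,4,6) conjunct1[OF a(5)]
      by (simp add: nonneg_def e)
  qed
lemma uic_all: "weak_UIC"
    unfolding weak_UIC_def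
  proof (intro allI impI)
    fix v bs b fs I c I' c'
    assume a: "0 \<le> v" "nonneg bs" "0 \<le> b" "nonneg fs"
      "honest_inclusion (player_txs [v] [v] [] @ others_txs bs) I"
      "valid_confirm (player_txs [v] [v] [] @ others_txs bs) I c"
      "honest_inclusion (player_txs [v] [b] fs @ others_txs bs) I'"
      "valid_confirm (player_txs [v] [b] fs @ others_txs bs) I' c'"
    define H where "H = player_txs [v] [v] [] @ others_txs bs"
    define D where "D = player_txs [v] [b] fs @ others_txs bs"
    have lenH: "length H = 1 + length bs" using L_len[of "[v]" "[v]" "[]" bs] unfolding H_def by simp
    have nthH: "\<And>i. i < length H \<Longrightarrow> (i < 1 \<and> H ! i = (v, Some v))
      \<or> (1 \<le> i \<and> i - 1 < length bs \<and> H ! i = (bs ! (i - 1), None))"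
    proof -
      fix i assume "i < length H"
      from L_nth[of "[v]" "[v]" i "[]" bs, OF refl this[unfolded H_def]]
      show "?thesis i" unfolding H_def by auto
    qed
    have nthD: "\<And>i. i < length D \<Longrightarrow> (i < 1 \<and> D ! i = (b, Some v))
      \<or> (1 \<le> i \<and> i < 1 + length fs \<and> D ! i = (fs ! (i - 1), Some 0))
      \<or> (1 + length fs \<le> i \<and> i - 1 - length fs < length bs \<and>
        D ! i = (bs ! (i - 1 - length fs), None))"
    proof -
      fix i assume "i < length D"
      then show "?thesis i" using L_nth[of "[b]" "[v]" i fs bs] unfolding D_def by auto
    qed
    have trH: "\<forall>i<length H. \<forall>w. snd (H ! i) = Some w \<longrightarrow> fst (H ! i) = w"
    proof (intro allI impI)
      fix i w assume that: "i < length H" "snd (H ! i) = Some w"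
      show "fst (H ! i) = w" using nthH[OF that(1)] that(2) by auto
    qed
    have nnH: "\<forall>i<length H. 0 \<le> fst (H ! i)"
    proof (intro allI impI)
      fix i assume that: "i < length H"
      show "0 \<le> fst (H ! i)" using nthH[OF that(1)] nonneg_nth[OF a(2), of "i - 1"] a(1) by auto
    qed
    have hI': "I' \<subseteq> {..<length D}" using a(7) unfolding honest_inclusion_def D_def by auto
    have fI': "finite I'" using hI' finite_subset by blast
    have H0: "0 < length H" "snd (H ! 0) = Some v" using lenH nthH[of 0] by auto
    have U0: "0 \<le> weak_utility False H I c"
      by (rule honest_user0[OF a(5)[folded H_def] a(6)[folded H_def] trH nnH])
    from dev_user[OF a(7)[folded D_def] a(8)[folded D_def]]
    have "weak_utility False D I' c' \<le> weak_utility False H I c"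
    proof
      assume "weak_utility False D I' c' \<le> 0" then show ?thesis using U0 by linarith
    next
      assume "\<exists>j w. c' = Some j \<and> j < length D \<and> snd (D ! j) = Some w
      \<and> weak_utility False D I' c' \<le> w - payment D I' c'
      \<and> (\<forall>a<length D. a \<noteq> j \<longrightarrow> fst (D ! a) \<le> payment D I' c')"
      then obtain j w where j: "c' = Some j" "j < length D" "snd (D ! j) = Some w"
        "weak_utility False D I' c' \<le> w - payment D I' c'"
        "\<forall>a<length D. a \<noteq> j \<longrightarrow> fst (D ! a) \<le> payment D I' c'" by blast
      have p0: "0 \<le> payment D I' c'" using pay_nonneg[OF fI'] .
      from nthD[OF j(2)] j(3) consider "j = 0" "w = v" | "w = 0" by auto
      then show ?thesis
      proof cases
        case 2 then show ?thesis using j(4) p0 U0 by linarith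
      next
        case 1
        have xb: "fst (H ! k) \<le> payment D I' c'" if "k < length H" "k \<noteq> 0" for k
        proof -
          have Hk: "H ! k = (bs ! (k - 1), None)" "k - 1 < length bs" using nthH[OF that(1)] that(2) by auto
          have Dk: "D ! (1 + length fs + (k - 1)) = (bs ! (k - 1), None)"
            using L_nth_others[of "[b]" "[v]" "k - 1" bs fs] Hk(2) unfolding D_def by simp
          moreover have "1 + length fs + (k - 1) < length D"
            using L_len[of "[b]" "[v]" fs bs] Hk(2) unfolding D_def by simp
          ultimately have "fst (D ! (1 + length fs + (k - 1))) \<le> payment D I' c'"
            using j(5) 1 by (intro j(5)[rule_format]) auto
          moreover have "fst (H ! k) = bs ! (k - 1)" using Hk(1) by simp
          moreover have "fst (D ! (1 + length fs + (k - 1))) = bs ! (k - 1)" using Dk by simp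
          ultimately show ?thesis by linarith
        qed
        have "v - payment D I' c' \<le> weak_utility False H I c"
          by (rule honest_user[OF a(5)[folded H_def] a(6)[folded H_def] trH nnH H0 p0 xb])
        then show ?thesis using j(4) 1 by linarith
      qed
    qed
    then show "weak_utility False D I' c' \<le> weak_utility False H I c" .
  qed

theorem mainTheorem6:
  fixes B :: enat
  assumes "2 \<le> B"
  shows "weak_UIC \<and> weak_MIC B \<and> (\<forall>c::nat. 1 \<le> c \<longrightarrow> weak_SCP c B)"
  using uic_all mic_all scp_all by blast

end
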